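(* Let $A\in\mathbb{R}^{s\times s}$ and $b\in\mathbb{R}^s$ be the coefficients of an $s$-stage Runge–Kutta scheme with $c=Ae$, $e=(1,\dots,1)^T$, and let $\tilde q\ge 1$ be an integer. For $j\ge1$ define $g^{(j)}(\zeta)=\zeta\, b^T (I-\zeta A)^{-1}\tau^{(j)}$. Then $g^{(j)}(\zeta)=0$ for all $\zeta>0$ for which $I-\zeta A$ is invertible and all $1\le j\le \tilde q$, if and only if the scheme has weak stage order $\tilde q$.
   Context: Powers of vectors are componentwise. The stage order vectors are $\tau^{(j)} = A c^{j-1} - \tfrac{1}{j}c^{j}$, $j=1,2,\dots$. The scheme is said to have weak stage order $\tilde q$ if there exists a subspace $V\subseteq\mathbb{R}^s$ with $AV\subseteq V$, $b^T v=0$ for all $v\in V$, and $\tau^{(j)}\in V$ for all $1\le j\le\tilde q$. *)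

theory Defs
  imports "HOL-Analysis.Analysis"
begin

text \<open>Runge--Kutta data: A is an s-by-s real matrix, b a real s-vector; the number of
stages s is the finite index type 's.\<close>

definition ones :: "real ^ 's" where
  "ones = (\<chi> i. 1)"

definition rk_c :: "real ^ 's ^ 's \<Rightarrow> real ^ 's" where
  "rk_c A = A *v ones"

definition cpow :: "real ^ 's \<Rightarrow> nat \<Rightarrow> real ^ 's" where
  "cpow v k = (\<chi> i. (v $ i) ^ k)"

definition tau :: "real ^ 's ^ 's \<Rightarrow> nat \<Rightarrow> real ^ 's" where
  "tau A j = A *v cpow (rk_c A) (j - 1) - (1 / real j) *\<^sub>R cpow (rk_c A) j"

definition gfun :: "real ^ 's ^ 's \<Rightarrow> real ^ 's \<Rightarrow> nat \<Rightarrow> real \<Rightarrow> real" where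
  "gfun A b j \<zeta> = \<zeta> * (b \<bullet> (matrix_inv (mat 1 - \<zeta> *\<^sub>R A) *v tau A j))"

definition weak_stage_order :: "real ^ 's ^ 's \<Rightarrow> real ^ 's \<Rightarrow> nat \<Rightarrow> bool" where
  "weak_stage_order A b q \<longleftrightarrow>
     (\<exists>V :: (real ^ 's) set. subspace V \<and> (\<forall>v\<in>V. A *v v \<in> V) \<and> (\<forall>v\<in>V. b \<bullet> v = 0)
        \<and> (\<forall>j. 1 \<le> j \<and> j \<le> q \<longrightarrow> tau A j \<in> V))"

end

theory Submission
  imports Defs
begin
lemma minv:
  fixes M :: "real ^ 'n ^ 'n"
  assumes "invertible M"
  shows "M ** matrix_inv M = mat 1" "matrix_inv M ** M = mat 1"
proof -
  have "\<exists>A'. M ** A' = mat 1 \<and> A' ** M = mat 1" using assms by (simp add: invertible_def)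
  then have "M ** matrix_inv M = mat 1 \<and> matrix_inv M ** M = mat 1"
    unfolding matrix_inv_def by (rule someI_ex)
  then show "M ** matrix_inv M = mat 1" "matrix_inv M ** M = mat 1" by auto
qed

lemma minv_v:
  fixes M :: "real ^ 'n ^ 'n"
  assumes "invertible M"
  shows "M *v (matrix_inv M *v x) = x" "matrix_inv M *v (M *v x) = x"
  using minv[OF assms] by (simp_all add: matrix_vector_mul_assoc)

lemma inv_in_subspace:
  fixes M :: "real ^ 'n ^ 'n"
  assumes "invertible M" "subspace V" "\<forall>v\<in>V. M *v v \<in> V" "t \<in> V"
  shows "matrix_inv M *v t \<in> V"
proof -
  have inj: "inj ((*v) M)" using assms(1) inj_matrix_vector_mult by blast
  have sub: "(*v) M ` V \<subseteq> V" using assms(3) by auto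
  have "dim ((*v) M ` V) = dim V"
    using dim_image_eq[of "(*v) M" V] inj by (simp add: inj_on_def inj_def)
  moreover have "subspace ((*v) M ` V)"
    using assms(2) by (simp add: linear_subspace_image)
  ultimately have "(*v) M ` V = V" using subspace_dim_equal[OF _ assms(2) sub] by auto
  then obtain y where "y \<in> V" "t = M *v y" using assms(4) by force
  then show ?thesis using minv_v[OF assms(1)] by simp
qed

lemma Mv: fixes A :: "real ^ 'n ^ 'n"
  shows "(mat 1 - c *\<^sub>R A) *v x = x - c *\<^sub>R (A *v x)"
  by (simp add: matrix_vector_mult_diff_rdistrib scaleR_matrix_vector_assoc)

lemma approx:
  fixes A :: "real ^ 'n ^ 'n" and t :: "real ^ 'n"
  shows "\<exists>z. (\<forall>n. z n > 0 \<and> invertible (mat 1 - z n *\<^sub>R A)) \<and>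
             (\<lambda>n. matrix_inv (mat 1 - z n *\<^sub>R A) *v t) \<longlonglongrightarrow> t"
proof -
  obtain K where K: "K > 0" "\<And>x. norm (A *v x) \<le> norm x * K"
    using bounded_linear.pos_bounded[OF matrix_vector_mul_bounded_linear[of A]] by blast
  define z where "z n = 1 / (2 * K * real (Suc n))" for n
  have zpos: "z n > 0" for n using K by (simp add: z_def)
  have zK: "z n * K \<le> 1/2" for n
  proof -
    have "z n * K = 1 / (2 * real (Suc n))" using K by (simp add: z_def)
    also have "\<dots> \<le> 1/2" by (simp add: frac_le)
    finally show ?thesis .
  qed
  have zK2: "z n * K * 2 = inverse (real (Suc n))" for n
  proof -
    have "z n * K * 2 = (K * 2) / (2 * K * real (Suc n))" by (simp add: z_def)
    also have "\<dots> = 1 / real (Suc n)" using K by (metis (no_types, lifting) divide_divide_eq_left' mult.commute nonzero_divide_mult_cancel_left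
      mult_eq_0_iff order_less_irrefl zero_neq_numeral)
    finally show ?thesis by (simp add: inverse_eq_divide)
  qed
  have inv: "invertible (mat 1 - z n *\<^sub>R A)" for n
  proof -
    have "x = 0" if "(mat 1 - z n *\<^sub>R A) *v x = 0" for x
    proof -
      from that have "x = z n *\<^sub>R (A *v x)" by (simp add: Mv)
      then have "norm x = z n * norm (A *v x)" using zpos[of n]
        by (metis norm_scaleR abs_of_pos)
      also have "\<dots> \<le> z n * (norm x * K)" using K(2) zpos[of n] by (simp add: mult_left_mono)
      also have "\<dots> = norm x * (z n * K)" by simp
      also have "\<dots> \<le> norm x * (1/2)" using zK[of n] by (intro mult_left_mono) auto
      finally show "x = 0" by simp
    qed
    then show ?thesis
      using invertible_left_inverse matrix_left_invertible_ker by blast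
  qed
  let ?y = "\<lambda>n. matrix_inv (mat 1 - z n *\<^sub>R A) *v t"
  have bnd: "norm (?y n - t) \<le> norm t * inverse (real (Suc n))" for n
  proof -
    have e: "?y n - z n *\<^sub>R (A *v ?y n) = t"
      using minv_v(1)[OF inv[of n], of t] by (simp add: Mv)
    have d: "?y n - t = z n *\<^sub>R (A *v ?y n)" using e by (simp add: algebra_simps)
    have n1: "norm (?y n - t) \<le> z n * (norm (?y n) * K)"
      using d K(2)[of "?y n"] zpos[of n] by (simp add: mult_left_mono)
    have "norm (?y n) \<le> norm t + norm (?y n - t)" by (metis norm_triangle_sub add.commute)
    also have "\<dots> \<le> norm t + norm (?y n) * (1/2)"
    proof -
      have "z n * (norm (?y n) * K) = norm (?y n) * (z n * K)" by simp
      also have "\<dots> \<le> norm (?y n) * (1/2)" using zK[of n] by (intro mult_left_mono) auto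
      finally show ?thesis using n1 by linarith
    qed
    finally have "norm (?y n) \<le> 2 * norm t" by simp
    then have "z n * (norm (?y n) * K) \<le> z n * (2 * norm t * K)"
      using zpos[of n] K by (simp add: mult_left_mono)
    also have "\<dots> = norm t * (z n * K * 2)" by simp
    finally show ?thesis using n1 zK2[of n] by simp
  qed
  have "(\<lambda>n. ?y n - t) \<longlonglongrightarrow> 0"
    apply (rule Lim_null_comparison[where g="\<lambda>n. norm t * inverse (real (Suc n))"])
    using bnd apply simp
    using tendsto_mult_right_zero[OF LIMSEQ_inverse_real_of_nat] by simp
  then have "(\<lambda>n. ?y n - t + t) \<longlonglongrightarrow> 0 + t" by (intro tendsto_add tendsto_const)
  then have "?y \<longlonglongrightarrow> t" by simp
  then show ?thesis using zpos inv by blast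
qed

theorem theorem2:
  fixes A :: "real ^ 's ^ 's" and b :: "real ^ 's" and q :: nat
  assumes "q \<ge> 1"
  shows "(\<forall>\<zeta>>0. invertible (mat 1 - \<zeta> *\<^sub>R A) \<longrightarrow>
            (\<forall>j. 1 \<le> j \<and> j \<le> q \<longrightarrow> gfun A b j \<zeta> = 0))
         \<longleftrightarrow> weak_stage_order A b q"
proof
  assume H: "\<forall>\<zeta>>0. invertible (mat 1 - \<zeta> *\<^sub>R A) \<longrightarrow>
            (\<forall>j. 1 \<le> j \<and> j \<le> q \<longrightarrow> gfun A b j \<zeta> = 0)"
  define S where "S = {matrix_inv (mat 1 - \<zeta> *\<^sub>R A) *v tau A j | \<zeta> j.
      \<zeta> > 0 \<and> invertible (mat 1 - \<zeta> *\<^sub>R A) \<and> 1 \<le> j \<and> j \<le> q}"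
  define V where "V = span S"
  have subV: "subspace V" unfolding V_def by (rule subspace_span)
  have bV: "\<forall>v\<in>V. b \<bullet> v = 0"
  proof -
    have "S \<subseteq> {x. b \<bullet> x = 0}"
    proof
      fix x assume "x \<in> S"
      then obtain \<zeta> j where x: "x = matrix_inv (mat 1 - \<zeta> *\<^sub>R A) *v tau A j" "\<zeta> > 0"
        "invertible (mat 1 - \<zeta> *\<^sub>R A)" "1 \<le> j" "j \<le> q" unfolding S_def by blast
      then have "gfun A b j \<zeta> = 0" using H by blast
      then show "x \<in> {x. b \<bullet> x = 0}" using x by (simp add: gfun_def)
    qed
    then have "V \<subseteq> {x. b \<bullet> x = 0}" unfolding V_def
      by (rule span_minimal) (rule subspace_hyperplane)
    then show ?thesis by blast
  qed
  have tV: "tau A j \<in> V" if j: "1 \<le> j" "j \<le> q" for j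
  proof -
    obtain z where z: "\<forall>n. z n > 0 \<and> invertible (mat 1 - z n *\<^sub>R A)"
      "(\<lambda>n. matrix_inv (mat 1 - z n *\<^sub>R A) *v tau A j) \<longlonglongrightarrow> tau A j"
      using approx by blast
    have "matrix_inv (mat 1 - z n *\<^sub>R A) *v tau A j \<in> V" for n
      unfolding V_def by (rule span_base) (use z j in \<open>auto simp: S_def\<close>)
    then show ?thesis using closed_sequentially[OF closed_subspace[OF subV] _ z(2)] by blast
  qed
  have AV: "\<forall>v\<in>V. A *v v \<in> V"
  proof -
    have sp: "subspace {v. A *v v \<in> V}"
      using subV unfolding subspace_def
      by (simp add: matrix_vector_right_distrib matrix_vector_mult_scaleR)
    have "S \<subseteq> {v. A *v v \<in> V}"
    proof
      fix x assume "x \<in> S"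
      then obtain \<zeta> j where x: "x = matrix_inv (mat 1 - \<zeta> *\<^sub>R A) *v tau A j" "\<zeta> > 0"
        "invertible (mat 1 - \<zeta> *\<^sub>R A)" "1 \<le> j" "j \<le> q" unfolding S_def by blast
      have e: "x - \<zeta> *\<^sub>R (A *v x) = tau A j"
        using minv_v(1)[OF x(3), of "tau A j"] x(1) by (simp add: Mv)
      then have "x - tau A j = \<zeta> *\<^sub>R (A *v x)" by (simp add: algebra_simps)
      then have "A *v x = (1/\<zeta>) *\<^sub>R (x - tau A j)" using x(2) by simp
      moreover have "x \<in> V" unfolding V_def by (rule span_base) fact
      ultimately have "A *v x \<in> V" using tV[OF x(4,5)] subV
        by (simp add: subspace_diff subspace_scale)
      then show "x \<in> {v. A *v v \<in> V}" by simp
    qed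
    then have "V \<subseteq> {v. A *v v \<in> V}" unfolding V_def
      by (rule span_minimal) (rule sp[unfolded V_def])
    then show ?thesis by blast
  qed
  show "weak_stage_order A b q" unfolding weak_stage_order_def
    using subV AV bV tV by blast
next
  assume "weak_stage_order A b q"
  then obtain V where V: "subspace V" "\<forall>v\<in>V. A *v v \<in> V" "\<forall>v\<in>V. b \<bullet> v = 0"
    "\<forall>j. 1 \<le> j \<and> j \<le> q \<longrightarrow> tau A j \<in> V" unfolding weak_stage_order_def by blast
  show "\<forall>\<zeta>>0. invertible (mat 1 - \<zeta> *\<^sub>R A) \<longrightarrow>
            (\<forall>j. 1 \<le> j \<and> j \<le> q \<longrightarrow> gfun A b j \<zeta> = 0)"
  proof (intro allI impI)
    fix \<zeta> :: real and j assume i: "invertible (mat 1 - \<zeta> *\<^sub>R A)" and j: "1 \<le> j \<and> j \<le> q"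
    have "\<forall>v\<in>V. (mat 1 - \<zeta> *\<^sub>R A) *v v \<in> V"
      using V(1,2) by (simp add: Mv subspace_diff subspace_scale)
    then have "matrix_inv (mat 1 - \<zeta> *\<^sub>R A) *v tau A j \<in> V"
      using inv_in_subspace[OF i V(1)] V(4) j by blast
    then show "gfun A b j \<zeta> = 0" using V(3) by (simp add: gfun_def)
  qed
qed

end
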